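(* Let $R$ be a commutative Noetherian ring with unity and let $x,y$ be nonzero zero divisors of $R$. If $0\neq\operatorname{ann}(x)\subsetneq\operatorname{ann}(y)$, then $\deg[x]\le\deg[y]$ in $\Gamma_E(R)$.
   Context: For $x,y\in R$ write $x\sim y$ iff $\operatorname{ann}(x)=\operatorname{ann}(y)$; $[x]$ denotes the equivalence class of $x$. Let $Z^*(R)$ be the set of nonzero zero divisors of $R$. The graph $\Gamma_E(R)$ is the simple graph whose vertices are the classes $[x]$ with $x\in Z^*(R)$, two distinct vertices $[x],[y]$ being adjacent iff $xy=0$. The degree $\deg[x]$ of a vertex is the number (possibly infinite) of vertices adjacent to it. *)

theory Defs
  imports Main
begin

definition is_ideal :: "'a::comm_ring_1 set \<Rightarrow> bool" where
  "is_ideal I \<longleftrightarrow> 0 \<in> I \<and> (\<forall>a\<in>I. \<forall>b\<in>I. a + b \<in> I) \<and> (\<forall>r. \<forall>a\<in>I. r * a \<in> I)"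

definition noetherian :: "'a::comm_ring_1 itself \<Rightarrow> bool" where
  "noetherian _ \<longleftrightarrow> (\<forall>I :: nat \<Rightarrow> 'a set. (\<forall>n. is_ideal (I n)) \<and> (\<forall>n. I n \<subseteq> I (Suc n))
      \<longrightarrow> (\<exists>N. \<forall>n\<ge>N. I n = I N))"

definition ann :: "'a::comm_ring_1 \<Rightarrow> 'a set" where
  "ann x = {r. r * x = 0}"

definition zdiv_star :: "'a::comm_ring_1 set" where
  "zdiv_star = {x. x \<noteq> 0 \<and> (\<exists>y. y \<noteq> 0 \<and> x * y = 0)}"

definition ann_class :: "'a::comm_ring_1 \<Rightarrow> 'a set" where
  "ann_class x = {z. ann z = ann x}"

definition gammaE_vertices :: "'a::comm_ring_1 set set" where
  "gammaE_vertices = ann_class ` zdiv_star"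

text \<open>Adjacency: distinct vertices [x],[y] with xy = 0 (independent of representatives).\<close>
definition gammaE_adj :: "'a::comm_ring_1 set \<Rightarrow> 'a set \<Rightarrow> bool" where
  "gammaE_adj C D \<longleftrightarrow> C \<in> gammaE_vertices \<and> D \<in> gammaE_vertices \<and> C \<noteq> D \<and>
     (\<exists>a\<in>C. \<exists>b\<in>D. a * b = 0)"

text \<open>Neighbourhood of a vertex; the degree is its cardinality (possibly infinite).\<close>
definition gammaE_nbhd :: "'a::comm_ring_1 set \<Rightarrow> 'a set set" where
  "gammaE_nbhd C = {D. gammaE_adj C D}"

end

theory Submission
  imports Defs
begin

lemma adj_char:
  fixes u :: "'a::comm_ring_1"
  assumes "D \<in> gammaE_nbhd (ann_class u)"
  shows "\<exists>z\<in>zdiv_star. D = ann_class z \<and> u * z = 0 \<and> D \<noteq> ann_class u"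
proof -
  from assms have adj: "gammaE_adj (ann_class u) D" by (simp add: gammaE_nbhd_def)
  then obtain z where z: "z \<in> zdiv_star" "D = ann_class z"
    by (auto simp: gammaE_adj_def gammaE_vertices_def)
  from adj obtain a b where ab: "a \<in> ann_class u" "b \<in> D" "a * b = 0"
    by (auto simp: gammaE_adj_def)
  have "b \<in> ann a" using ab(3) by (simp add: ann_def mult.commute)
  hence "b \<in> ann u" using ab(1) by (simp add: ann_class_def)
  hence "u \<in> ann b" by (simp add: ann_def mult.commute)
  hence "u \<in> ann z" using ab(2) z(2) by (simp add: ann_class_def)
  hence "u * z = 0" by (simp add: ann_def)
  with z adj show ?thesis by (auto simp: gammaE_adj_def)
qed

lemma in_nbhd:
  fixes u z :: "'a::comm_ring_1"
  assumes "u \<in> zdiv_star" "z \<in> zdiv_star" "u * z = 0" "ann_class z \<noteq> ann_class u"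
  shows "ann_class z \<in> gammaE_nbhd (ann_class u)"
proof -
  have "u \<in> ann_class u" "z \<in> ann_class z" by (auto simp: ann_class_def)
  with assms show ?thesis
    unfolding gammaE_nbhd_def gammaE_adj_def gammaE_vertices_def by auto
qed

theorem proposition2p1:
  fixes x y :: "'a::comm_ring_1"
  assumes "noetherian TYPE('a)"
    and "x \<in> zdiv_star" and "y \<in> zdiv_star"
    and "ann x \<noteq> {0}" and "ann x \<subset> ann y"
  shows "(card_of (gammaE_nbhd (ann_class x)), card_of (gammaE_nbhd (ann_class y))) \<in> ordLeq"
proof -
  let ?A = "gammaE_nbhd (ann_class x)" and ?B = "gammaE_nbhd (ann_class y)"
  define f where "f D = (if D = ann_class y then ann_class x else D)" for D
  have xy: "ann_class x \<noteq> ann_class y"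
  proof
    assume "ann_class x = ann_class y"
    hence "y \<in> ann_class x" by (auto simp: ann_class_def)
    hence "ann y = ann x" by (simp add: ann_class_def)
    with assms(5) show False by simp
  qed
  have xnotA: "ann_class x \<notin> ?A" using adj_char by blast
  have "inj_on f ?A"
    unfolding inj_on_def f_def using xnotA by auto
  moreover have "f ` ?A \<subseteq> ?B"
  proof
    fix E assume "E \<in> f ` ?A"
    then obtain D where D: "D \<in> ?A" "E = f D" by auto
    from adj_char[OF D(1)] obtain z where z: "z \<in> zdiv_star" "D = ann_class z" "x * z = 0"
      by blast
    have "z \<in> ann x" using z(3) by (simp add: ann_def mult.commute)
    hence "z \<in> ann y" using assms(5) by auto
    hence yz: "y * z = 0" by (simp add: ann_def mult.commute)
    show "E \<in> ?B"
    proof (cases "D = ann_class y")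
      case True
      have "y \<in> ann_class z" using True z(2) by (simp add: ann_class_def)
      hence "ann y = ann z" by (simp add: ann_class_def)
      hence "x \<in> ann y" using z(3) by (simp add: ann_def)
      hence "y * x = 0" by (simp add: ann_def mult.commute)
      hence "ann_class x \<in> ?B" using in_nbhd[OF assms(3) assms(2)] xy by auto
      thus ?thesis using D True f_def by simp
    next
      case False
      hence "ann_class z \<in> ?B" using in_nbhd[OF assms(3) z(1) yz] z(2) by auto
      thus ?thesis using D False z(2) f_def by simp
    qed
  qed
  ultimately show ?thesis using card_of_ordLeq by blast
qed

end
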